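(* Let $\mathbf{X}\in\mathbb{R}_+^{L\times N}$, $\lambda\ge0$, $\xi>0$, $\mathbf{H}=\mathbf{1}_K\mathbf{h}^T$ with $\mathbf{h}\in[0,\tfrac12]^N$, and $$\mathcal{O}_\xi(\mathbf{M},\mathbf{A})=\tfrac12\|\mathbf{X}-\mathbf{M}\mathbf{A}\|_{2,1}+\lambda\big\|(\mathbf{A}+\xi)^{\mathbf{1}-\mathbf{H}}\big\|_1 .$$ Let $\mathbf{M}\in\mathbb{R}_+^{L\times K}$, $\mathbf{A}\in\mathbb{R}_+^{K\times N}$ be such that every row of $\mathbf{M}\mathbf{A}-\mathbf{X}$ is nonzero, and let $\mathbf{U}$ be diagonal with $U_{ll}=\tfrac12\|(\mathbf{M}\mathbf{A}-\mathbf{X})^l\|_2^{-1}$. Holding $\mathbf{U}$ fixed, compute $\bar{\mathbf{A}}$ by $$\bar A_{kn}=A_{kn}\frac{(\mathbf{M}^T\mathbf{U}\mathbf{X})_{kn}}{\big(\mathbf{M}^T\mathbf{U}\mathbf{M}\mathbf{A}+\lambda(\mathbf{1}-\mathbf{H})\circ(\mathbf{A}+\xi)^{-\mathbf{H}}\big)_{kn}}$$ and then $\bar{\mathbf{M}}$ by $$\bar M_{lk}=M_{lk}\frac{(\mathbf{U}\mathbf{X}\bar{\mathbf{A}}^T)_{lk}}{(\mathbf{U}\mathbf{M}\bar{\mathbf{A}}\bar{\mathbf{A}}^T)_{lk}}$$ (all denominators assumed positive). Then $\mathcal{O}_\xi(\bar{\mathbf{M}},\bar{\mathbf{A}})\le\mathcal{O}_\xi(\mathbf{M},\mathbf{A})$;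 i.e., the objective is non-increasing under these updating rules.
   Context: For a matrix $\mathbf{Y}$, $\mathbf{y}^l$ denotes its $l$-th row and $\|\mathbf{Y}\|_{2,1}=\sum_l\|\mathbf{y}^l\|_2$. $\|\mathbf{B}\|_1=\sum_{k,n}|B_{kn}|$. $(\mathbf{A}+\xi)^{\mathbf{1}-\mathbf{H}}=[(A_{kn}+\xi)^{1-H_{kn}}]$ and $(\mathbf{A}+\xi)^{-\mathbf{H}}=[(A_{kn}+\xi)^{-H_{kn}}]$ are entrywise powers, $\circ$ is the Hadamard product, $\mathbf{1}$ is the all-ones $K\times N$ matrix and $\mathbf{1}_K$ the all-ones vector of length $K$. $\mathbf{H}$ (the "guidance map" replicated over $K$ rows) is held fixed during the update. *)

theory Defs
  imports "HOL-Analysis.Analysis"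
begin

text \<open>Matrices are Cartesian-product types: an L x N matrix is real^'n^'l,
  whose l-th row is Y $ l (a vector in real^'n with the Euclidean norm).\<close>

definition norm21 :: "real^'n^'l \<Rightarrow> real" where
  "norm21 Y = (\<Sum>l\<in>UNIV. norm (Y $ l))"

definition norm1 :: "real^'n^'k \<Rightarrow> real" where
  "norm1 B = (\<Sum>k\<in>UNIV. \<Sum>n\<in>UNIV. \<bar>B $ k $ n\<bar>)"

text \<open>Entrywise power (A + xi)^(1 - H), with H = 1_K h^T, i.e. H_kn = h n.\<close>
definition pow_1mH :: "real^'n^'k \<Rightarrow> real \<Rightarrow> real^'n \<Rightarrow> real^'n^'k" where
  "pow_1mH A xi h = (\<chi> k n. (A $ k $ n + xi) powr (1 - h $ n))"

definition objective ::
  "real \<Rightarrow> real \<Rightarrow> real^'n \<Rightarrow> real^'n^'l \<Rightarrow> real^'k^'l \<Rightarrow> real^'n^'k \<Rightarrow> real" where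
  "objective lam xi h X M A =
     1/2 * norm21 (X - M ** A) + lam * norm1 (pow_1mH A xi h)"

definition Umat :: "real^'n^'l \<Rightarrow> real^'k^'l \<Rightarrow> real^'n^'k \<Rightarrow> real^'l^'l" where
  "Umat X M A = (\<chi> i j. if i = j then 1/2 * inverse (norm ((M ** A - X) $ i)) else 0)"

definition denomA ::
  "real \<Rightarrow> real \<Rightarrow> real^'n \<Rightarrow> real^'n^'l \<Rightarrow> real^'k^'l \<Rightarrow> real^'n^'k \<Rightarrow> real^'n^'k" where
  "denomA lam xi h X M A =
     transpose M ** Umat X M A ** M ** A
     + (\<chi> k n. lam * (1 - h $ n) * (A $ k $ n + xi) powr (- h $ n))"

definition updA ::
  "real \<Rightarrow> real \<Rightarrow> real^'n \<Rightarrow> real^'n^'l \<Rightarrow> real^'k^'l \<Rightarrow> real^'n^'k \<Rightarrow> real^'n^'k" where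
  "updA lam xi h X M A =
     (\<chi> k n. A $ k $ n * (transpose M ** Umat X M A ** X) $ k $ n
                / denomA lam xi h X M A $ k $ n)"

text \<open>M-update uses the same (fixed) U, computed from the old M and A.\<close>
definition updM ::
  "real^'l^'l \<Rightarrow> real^'n^'l \<Rightarrow> real^'k^'l \<Rightarrow> real^'n^'k \<Rightarrow> real^'k^'l" where
  "updM U X M Ab =
     (\<chi> l k. M $ l $ k * (U ** X ** transpose Ab) $ l $ k
                / (U ** M ** Ab ** transpose Ab) $ l $ k)"

end

theory Submission imports Defs begin

lemma cs_weighted:
  fixes w t :: "'a \<Rightarrow> real"
  assumes "\<And>k. k \<in> S \<Longrightarrow> w k \<ge> 0"
  shows "(\<Sum>k\<in>S. w k * t k)\<^sup>2 \<le> (\<Sum>k\<in>S. w k) * (\<Sum>k\<in>S. w k * (t k)\<^sup>2)"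
proof -
  have "(\<Sum>k\<in>S. w k * t k) = (\<Sum>k\<in>S. sqrt (w k) * (sqrt (w k) * t k))"
    using assms by (intro sum.cong) (auto simp flip: mult.assoc)
  moreover have "(\<Sum>k\<in>S. w k) = (\<Sum>k\<in>S. (sqrt (w k))\<^sup>2)"
    using assms by (intro sum.cong) auto
  moreover have "(\<Sum>k\<in>S. w k * (t k)\<^sup>2) = (\<Sum>k\<in>S. (sqrt (w k) * t k)\<^sup>2)"
    using assms by (intro sum.cong) (auto simp: power_mult_distrib)
  ultimately show ?thesis using Cauchy_Schwarz_ineq_sum[of "\<lambda>k. sqrt (w k)" "\<lambda>k. sqrt (w k) * t k" S]
    by simp
qed

lemma scalar_step:
  fixes a P c b :: real
  assumes "a \<ge> 0" "c \<ge> 0" "P + c > 0"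
  shows "a * (P * ((b/(P+c))\<^sup>2 - 1) - 2 * b * (b/(P+c) - 1)) + 2 * c * a * (b/(P+c) - 1) \<le> 0"
proof -
  define d where "d = P + c"
  define t where "t = b / d"
  have d: "d > 0" using assms d_def by simp
  have bt: "b = t * d" using d t_def by simp
  have "P * (t\<^sup>2 - 1) - 2 * b * (t - 1) + 2 * c * (t - 1) = - (b - d)\<^sup>2 / d - c * (t - 1)\<^sup>2"
    using d unfolding bt d_def by (simp add: field_simps power2_eq_square)
  also have "\<dots> \<le> 0"
  proof -
    have "(b - d)\<^sup>2 / d \<ge> 0" using d by simp
    moreover have "c * (t - 1)\<^sup>2 \<ge> 0" using assms by simp
    ultimately show ?thesis by linarith
  qed
  finally have "P * (t\<^sup>2 - 1) - 2 * b * (t - 1) + 2 * c * (t - 1) \<le> 0" .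
  hence "a * (P * (t\<^sup>2 - 1) - 2 * b * (t - 1) + 2 * c * (t - 1)) \<le> 0"
    using assms(1) by (simp add: mult_nonneg_nonpos)
  thus ?thesis unfolding t_def d_def by (simp add: algebra_simps)
qed

lemma tangent_powr:
  fixes x y p :: real
  assumes "x > 0" "y > 0" "0 \<le> p" "p \<le> 1"
  shows "y powr p \<le> x powr p + p * x powr (p - 1) * (y - x)"
proof -
  have "y powr p * x powr (1 - p) \<le> p * y + (1 - p) * x"
    using Youngs_inequality_0[of p "1-p" y x] assms by simp
  hence "y powr p * x powr (1 - p) * x powr (p - 1) \<le> (p * y + (1 - p) * x) * x powr (p - 1)"
    by (rule mult_right_mono) simp
  moreover have "x powr (1 - p) * x powr (p - 1) = 1"
  proof -
    have "x powr (1 - p) * x powr (p - 1) = x powr ((1 - p) + (p - 1))" by (rule powr_add[symmetric])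
    also have "\<dots> = 1" using assms by simp
    finally show ?thesis .
  qed
  moreover have "x * x powr (p - 1) = x powr p"
  proof -
    have "x powr p = x powr (1 + (p - 1))" by simp
    also have "\<dots> = x powr 1 * x powr (p - 1)" by (rule powr_add)
    also have "\<dots> = x * x powr (p - 1)" using assms by simp
    finally show ?thesis by simp
  qed
  ultimately show ?thesis by (simp add: algebra_simps)
qed

lemma quad_pt:
  fixes X :: real and w t :: "'k \<Rightarrow> real"
  assumes "\<And>k. w k \<ge> 0"
  shows "(X - (\<Sum>k\<in>S. w k * t k))\<^sup>2 \<le> (X - (\<Sum>k\<in>S. w k))\<^sup>2
     + (\<Sum>k\<in>S. w k * ((\<Sum>j\<in>S. w j) * ((t k)\<^sup>2 - 1) - 2 * X * (t k - 1)))"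
proof -
  have cs: "(\<Sum>k\<in>S. w k * t k)\<^sup>2 \<le> (\<Sum>k\<in>S. w k) * (\<Sum>k\<in>S. w k * (t k)\<^sup>2)"
    using cs_weighted[of S w t] assms by blast
  have e: "(\<Sum>k\<in>S. w k * ((\<Sum>j\<in>S. w j) * ((t k)\<^sup>2 - 1) - 2 * X * (t k - 1)))
     = (\<Sum>j\<in>S. w j) * (\<Sum>k\<in>S. w k * (t k)\<^sup>2) - (\<Sum>j\<in>S. w j) * (\<Sum>j\<in>S. w j)
       - 2 * X * (\<Sum>k\<in>S. w k * t k) + 2 * X * (\<Sum>j\<in>S. w j)"
    by (simp add: algebra_simps sum_distrib_left sum_subtractf sum.distrib sum_distrib_right)
  show ?thesis unfolding e using cs by (simp add: power2_eq_square algebra_simps)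
qed

lemma quad_bound:
  fixes u :: "'l::finite \<Rightarrow> real" and X :: "'l \<Rightarrow> 'n::finite \<Rightarrow> real"
    and w t :: "'l \<Rightarrow> 'k::finite \<Rightarrow> 'n \<Rightarrow> real"
  assumes "\<And>l. u l \<ge> 0" "\<And>l k n. w l k n \<ge> 0"
  shows "(\<Sum>l\<in>UNIV. u l * (\<Sum>n\<in>UNIV. (X l n - (\<Sum>k\<in>UNIV. w l k n * t l k n))\<^sup>2))
    \<le> (\<Sum>l\<in>UNIV. u l * (\<Sum>n\<in>UNIV. (X l n - (\<Sum>k\<in>UNIV. w l k n))\<^sup>2))
      + (\<Sum>l\<in>UNIV. \<Sum>n\<in>UNIV. \<Sum>k\<in>UNIV. u l * w l k n * ((\<Sum>j\<in>UNIV. w l j n) * ((t l k n)\<^sup>2 - 1) - 2 * X l n * (t l k n - 1)))"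
proof -
  have "u l * (\<Sum>n\<in>UNIV. (X l n - (\<Sum>k\<in>UNIV. w l k n * t l k n))\<^sup>2)
     \<le> u l * (\<Sum>n\<in>UNIV. (X l n - (\<Sum>k\<in>UNIV. w l k n))\<^sup>2)
       + (\<Sum>n\<in>UNIV. \<Sum>k\<in>UNIV. u l * w l k n * ((\<Sum>j\<in>UNIV. w l j n) * ((t l k n)\<^sup>2 - 1) - 2 * X l n * (t l k n - 1)))" for l
  proof -
    have "(\<Sum>n\<in>UNIV. (X l n - (\<Sum>k\<in>UNIV. w l k n * t l k n))\<^sup>2)
      \<le> (\<Sum>n\<in>UNIV. (X l n - (\<Sum>k\<in>UNIV. w l k n))\<^sup>2
          + (\<Sum>k\<in>UNIV. w l k n * ((\<Sum>j\<in>UNIV. w l j n) * ((t l k n)\<^sup>2 - 1) - 2 * X l n * (t l k n - 1))))"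
      by (intro sum_mono quad_pt assms)
    hence "u l * (\<Sum>n\<in>UNIV. (X l n - (\<Sum>k\<in>UNIV. w l k n * t l k n))\<^sup>2)
      \<le> u l * (\<Sum>n\<in>UNIV. (X l n - (\<Sum>k\<in>UNIV. w l k n))\<^sup>2
          + (\<Sum>k\<in>UNIV. w l k n * ((\<Sum>j\<in>UNIV. w l j n) * ((t l k n)\<^sup>2 - 1) - 2 * X l n * (t l k n - 1))))"
      using assms(1) by (rule mult_left_mono) 
    thus ?thesis by (simp add: sum.distrib sum_distrib_left algebra_simps)
  qed
  hence "(\<Sum>l\<in>UNIV. u l * (\<Sum>n\<in>UNIV. (X l n - (\<Sum>k\<in>UNIV. w l k n * t l k n))\<^sup>2))
    \<le> (\<Sum>l\<in>UNIV. u l * (\<Sum>n\<in>UNIV. (X l n - (\<Sum>k\<in>UNIV. w l k n))\<^sup>2)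
      + (\<Sum>n\<in>UNIV. \<Sum>k\<in>UNIV. u l * w l k n * ((\<Sum>j\<in>UNIV. w l j n) * ((t l k n)\<^sup>2 - 1) - 2 * X l n * (t l k n - 1))))"
    by (intro sum_mono)
  thus ?thesis by (simp add: sum.distrib)
qed

lemma swap3: "(\<Sum>l\<in>L. \<Sum>n\<in>N. \<Sum>k\<in>K. f l n k) = (\<Sum>k\<in>K. \<Sum>n\<in>N. \<Sum>l\<in>L. f l n k)"
proof -
  have "(\<Sum>l\<in>L. \<Sum>n\<in>N. \<Sum>k\<in>K. f l n k) = (\<Sum>l\<in>L. \<Sum>k\<in>K. \<Sum>n\<in>N. f l n k)"
    by (rule sum.cong[OF refl], rule sum.swap)
  also have "\<dots> = (\<Sum>k\<in>K. \<Sum>l\<in>L. \<Sum>n\<in>N. f l n k)" by (rule sum.swap)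
  also have "\<dots> = (\<Sum>k\<in>K. \<Sum>n\<in>N. \<Sum>l\<in>L. f l n k)"
    by (rule sum.cong[OF refl], rule sum.swap)
  finally show ?thesis .
qed

lemma mm_entry: "(P ** Q) $ i $ j = (\<Sum>k\<in>UNIV. P $ i $ k * Q $ k $ j)"
  by (simp add: matrix_matrix_mult_def)

lemma delta_sum: fixes l :: "'a::finite" shows "(\<Sum>i\<in>UNIV. (if l = i then c else 0) * f i) = c * (f l :: real)"
proof -
  have "(\<Sum>i\<in>UNIV. (if l = i then c else 0) * f i) = (\<Sum>i\<in>UNIV. if l = i then c * f l else 0)"
    by (rule sum.cong) auto
  thus ?thesis using sum.delta[of UNIV l "\<lambda>_. c * f l"] by (simp add: eq_commute)
qed

lemma U_entry: "(Umat X M A ** Y) $ l $ j = Umat X M A $ l $ l * Y $ l $ j"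
  unfolding matrix_matrix_mult_def Umat_def by (simp only: vec_lambda_beta delta_sum) simp

lemma normsq_row: "(norm ((X - P ** Q) $ l))\<^sup>2 = (\<Sum>n\<in>UNIV. (X $ l $ n - (\<Sum>k\<in>UNIV. P $ l $ k * Q $ k $ n))\<^sup>2)"
  unfolding power2_norm_eq_inner by (simp add: inner_vec_def matrix_matrix_mult_def power2_eq_square)

lemma test:
  fixes X :: "real^'n^'l" and M :: "real^'k^'l" and A :: "real^'n^'k"
  shows "(transpose M ** Umat X M A ** M ** A) $ k $ n = (\<Sum>l\<in>UNIV. M$l$k * (Umat X M A $ l $ l * (\<Sum>j\<in>UNIV. M$l$j * A$j$n)))"
  by (simp only: matrix_mul_assoc[symmetric] mm_entry[of "transpose M"] U_entry) (simp add: mm_entry transpose_def)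

theorem theorem2:
  fixes X :: "real^'n^'l" and M :: "real^'k^'l" and A :: "real^'n^'k"
    and h :: "real^'n" and lam xi :: real
  assumes X_nonneg: "\<forall>l n. X $ l $ n \<ge> 0"
    and M_nonneg: "\<forall>l k. M $ l $ k \<ge> 0"
    and A_nonneg: "\<forall>k n. A $ k $ n \<ge> 0"
    and lam: "lam \<ge> 0" and xi: "xi > 0"
    and h: "\<forall>n. 0 \<le> h $ n \<and> h $ n \<le> 1/2"
    and rows: "\<forall>l. (M ** A - X) $ l \<noteq> 0"
    and denA_pos: "\<forall>k n. denomA lam xi h X M A $ k $ n > 0"
    and denM_pos: "\<forall>l k. (Umat X M A ** M ** updA lam xi h X M A
                            ** transpose (updA lam xi h X M A)) $ l $ k > 0"
  shows "objective lam xi h X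
           (updM (Umat X M A) X M (updA lam xi h X M A)) (updA lam xi h X M A)
         \<le> objective lam xi h X M A"
proof -
  define U where "U = Umat X M A"
  define u where "u l = U $ l $ l" for l
  define s where "s l = norm ((M ** A - X) $ l)" for l
  have s_pos: "s l > 0" for l using rows by (simp add: s_def)
  have u_eq: "u l = 1 / (2 * s l)" for l
    unfolding u_def U_def Umat_def s_def by (simp add: inverse_eq_divide)
  have u_nn: "u l \<ge> 0" for l using s_pos[of l] by (simp add: u_eq)
  define Ab where "Ab = updA lam xi h X M A"
  define Mb where "Mb = updM U X M Ab"
  define B where "B k n = (\<Sum>l\<in>UNIV. M$l$k * (u l * X$l$n))" for k n
  define S where "S l n = (\<Sum>j\<in>UNIV. M$l$j * A$j$n)" for l n
  define P where "P k n = (\<Sum>l\<in>UNIV. M$l$k * (u l * S l n))" for k n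
  define c where "c k n = lam * (1 - h$n) * (A$k$n + xi) powr (- h$n)" for k n
  define D where "D k n = denomA lam xi h X M A $ k $ n" for k n
  have D_eq: "D k n = P k n + c k n" for k n
    by (simp add: D_def denomA_def P_def S_def c_def matrix_mul_assoc[symmetric] mm_entry[of "transpose M"]
        U_entry u_def U_def) (simp add: mm_entry transpose_def)
  have D_pos: "D k n > 0" for k n using denA_pos by (simp add: D_def)
  have B_eq: "(transpose M ** Umat X M A ** X) $ k $ n = B k n" for k n
    by (simp only: matrix_mul_assoc[symmetric] mm_entry[of "transpose M"] U_entry)
      (simp add: B_def u_def U_def transpose_def)
  have B_nn: "B k n \<ge> 0" for k n
    unfolding B_def using M_nonneg u_nn X_nonneg by (intro sum_nonneg mult_nonneg_nonneg) auto
  have c_nn: "c k n \<ge> 0" for k n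
    unfolding c_def using lam h[rule_format, of n] by (intro mult_nonneg_nonneg) auto
  define tA where "tA k n = B k n / D k n" for k n
  have Ab_eq: "Ab$k$n = A$k$n * tA k n" for k n
    by (simp add: Ab_def updA_def B_eq tA_def D_def)
  have Ab_nn: "Ab$k$n \<ge> 0" for k n
    unfolding Ab_eq tA_def using A_nonneg B_nn D_pos[of k n] by simp
  define E where "E l k = (\<Sum>n\<in>UNIV. u l * X$l$n * Ab$k$n)" for l k
  define S2 where "S2 l n = (\<Sum>j\<in>UNIV. M$l$j * Ab$j$n)" for l n
  define F where "F l k = (\<Sum>n\<in>UNIV. u l * S2 l n * Ab$k$n)" for l k
  have E_eq: "(U ** X ** transpose Ab) $ l $ k = E l k" for l k
    unfolding mm_entry[of "U ** X"] unfolding U_def U_entry by (simp add: E_def u_def U_def transpose_def)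
  have F_eq: "(U ** M ** Ab ** transpose Ab) $ l $ k = F l k" for l k
    unfolding mm_entry[of "U ** M ** Ab"] mm_entry[of "U ** M"] unfolding U_def U_entry
    by (simp add: F_def S2_def u_def U_def transpose_def sum_distrib_left sum_distrib_right mult.assoc)
  have F_pos: "F l k > 0" for l k using denM_pos F_eq by (simp add: U_def Ab_def)
  define sM where "sM l k = E l k / F l k" for l k
  have Mb_eq: "Mb$l$k = M$l$k * sM l k" for l k
    by (simp add: Mb_def updM_def E_eq F_eq sM_def)
  define W :: "real^'k^'l \<Rightarrow> real^'n^'k \<Rightarrow> real" where
    "W Mx Ax = (\<Sum>l\<in>UNIV. u l * (\<Sum>n\<in>UNIV. (X$l$n - (\<Sum>k\<in>UNIV. Mx$l$k * Ax$k$n))\<^sup>2))" for Mx Ax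
  have st1: "norm21 (X - Mb ** Ab) \<le> W Mb Ab + (\<Sum>l\<in>UNIV. s l / 2)"
  proof -
    have "norm ((X - Mb ** Ab) $ l) \<le> u l * (norm ((X - Mb ** Ab) $ l))\<^sup>2 + s l / 2" for l
    proof -
      define r where "r = norm ((X - Mb ** Ab) $ l)"
      have "u l * r\<^sup>2 + s l / 2 - r = (r - s l)\<^sup>2 / (2 * s l)"
        using s_pos[of l] by (simp add: u_eq field_simps power2_eq_square)
      also have "\<dots> \<ge> 0" using s_pos[of l] by simp
      finally show ?thesis unfolding r_def by simp
    qed
    hence "norm21 (X - Mb ** Ab) \<le> (\<Sum>l\<in>UNIV. u l * (norm ((X - Mb ** Ab) $ l))\<^sup>2 + s l / 2)"
      unfolding norm21_def by (intro sum_mono)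
    thus ?thesis unfolding normsq_row by (simp add: W_def sum.distrib)
  qed
  have st1eq: "norm21 (X - M ** A) = W M A + (\<Sum>l\<in>UNIV. s l / 2)"
  proof -
    have "norm ((X - M ** A) $ l) = u l * (norm ((X - M ** A) $ l))\<^sup>2 + s l / 2" for l
    proof -
      have "norm ((X - M ** A) $ l) = s l" unfolding s_def by (simp add: norm_minus_commute)
      thus ?thesis using s_pos[of l] by (simp add: u_eq field_simps power2_eq_square)
    qed
    hence "norm21 (X - M ** A) = (\<Sum>l\<in>UNIV. u l * (norm ((X - M ** A) $ l))\<^sup>2 + s l / 2)"
      unfolding norm21_def by (intro sum.cong) auto
    thus ?thesis unfolding normsq_row by (simp add: W_def sum.distrib)
  qed
  have st2: "W Mb Ab \<le> W M Ab"
  proof -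
    have "W Mb Ab = (\<Sum>l\<in>UNIV. u l * (\<Sum>n\<in>UNIV. (X$l$n - (\<Sum>k\<in>UNIV. (M$l$k * Ab$k$n) * sM l k))\<^sup>2))"
      unfolding W_def Mb_eq by (simp add: ac_simps)
    also have "\<dots> \<le> (\<Sum>l\<in>UNIV. u l * (\<Sum>n\<in>UNIV. (X$l$n - (\<Sum>k\<in>UNIV. (M$l$k * Ab$k$n)))\<^sup>2))
      + (\<Sum>l\<in>UNIV. \<Sum>n\<in>UNIV. \<Sum>k\<in>UNIV. u l * (M$l$k * Ab$k$n) * ((\<Sum>j\<in>UNIV. M$l$j * Ab$j$n) * ((sM l k)\<^sup>2 - 1) - 2 * X$l$n * (sM l k - 1)))"
      by (rule quad_bound[where u=u and X="\<lambda>l n. X$l$n" and w="\<lambda>l k n. M$l$k * Ab$k$n" and t="\<lambda>l k n. sM l k"])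
        (use u_nn M_nonneg Ab_nn in auto)
    also have "(\<Sum>l\<in>UNIV. \<Sum>n\<in>UNIV. \<Sum>k\<in>UNIV. u l * (M$l$k * Ab$k$n) * ((\<Sum>j\<in>UNIV. M$l$j * Ab$j$n) * ((sM l k)\<^sup>2 - 1) - 2 * X$l$n * (sM l k - 1)))
       = (\<Sum>l\<in>UNIV. \<Sum>k\<in>UNIV. M$l$k * (F l k * ((sM l k)\<^sup>2 - 1) - 2 * E l k * (sM l k - 1)))"
    proof -
      have "(\<Sum>l\<in>UNIV. \<Sum>n\<in>UNIV. \<Sum>k\<in>UNIV. u l * (M$l$k * Ab$k$n) * ((\<Sum>j\<in>UNIV. M$l$j * Ab$j$n) * ((sM l k)\<^sup>2 - 1) - 2 * X$l$n * (sM l k - 1)))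
        = (\<Sum>l\<in>UNIV. \<Sum>k\<in>UNIV. \<Sum>n\<in>UNIV. u l * (M$l$k * Ab$k$n) * ((\<Sum>j\<in>UNIV. M$l$j * Ab$j$n) * ((sM l k)\<^sup>2 - 1) - 2 * X$l$n * (sM l k - 1)))"
        by (rule sum.cong[OF refl], rule sum.swap)
      also have "\<dots> = (\<Sum>l\<in>UNIV. \<Sum>k\<in>UNIV. M$l$k * (F l k * ((sM l k)\<^sup>2 - 1) - 2 * E l k * (sM l k - 1)))"
      proof (intro sum.cong refl)
        fix l k
        have "M$l$k * (F l k * ((sM l k)\<^sup>2 - 1) - 2 * E l k * (sM l k - 1))
            = M$l$k * ((sM l k)\<^sup>2 - 1) * F l k - 2 * M$l$k * (sM l k - 1) * E l k"
          by (simp add: algebra_simps)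
        also have "\<dots> = (\<Sum>n\<in>UNIV. M$l$k * ((sM l k)\<^sup>2 - 1) * (u l * S2 l n * Ab$k$n))
                       - (\<Sum>n\<in>UNIV. 2 * M$l$k * (sM l k - 1) * (u l * X$l$n * Ab$k$n))"
          by (simp only: F_def E_def sum_distrib_left)
        also have "\<dots> = (\<Sum>n\<in>UNIV. M$l$k * ((sM l k)\<^sup>2 - 1) * (u l * S2 l n * Ab$k$n)
                       - 2 * M$l$k * (sM l k - 1) * (u l * X$l$n * Ab$k$n))"
          by (simp only: sum_subtractf)
        also have "\<dots> = (\<Sum>n\<in>UNIV. u l * (M$l$k * Ab$k$n) * (S2 l n * ((sM l k)\<^sup>2 - 1) - 2 * X$l$n * (sM l k - 1)))"
          by (intro sum.cong refl) (simp add: algebra_simps)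
        finally show "(\<Sum>n\<in>UNIV. u l * (M$l$k * Ab$k$n) * ((\<Sum>j\<in>UNIV. M$l$j * Ab$j$n) * ((sM l k)\<^sup>2 - 1) - 2 * X$l$n * (sM l k - 1)))
           = M$l$k * (F l k * ((sM l k)\<^sup>2 - 1) - 2 * E l k * (sM l k - 1))"
          unfolding S2_def by simp
      qed
      finally show ?thesis .
    qed
    also have "(\<Sum>l\<in>UNIV. \<Sum>k\<in>UNIV. M$l$k * (F l k * ((sM l k)\<^sup>2 - 1) - 2 * E l k * (sM l k - 1))) \<le> 0"
    proof (intro sum_nonpos)
      fix l k
      show "M$l$k * (F l k * ((sM l k)\<^sup>2 - 1) - 2 * E l k * (sM l k - 1)) \<le> 0"
        using scalar_step[of "M$l$k" 0 "F l k" "E l k"] M_nonneg F_pos[of l k]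
        by (simp add: sM_def)
    qed
    finally show ?thesis by (simp add: W_def)
  qed
  have st3: "W M Ab + 2 * (\<Sum>k\<in>UNIV. \<Sum>n\<in>UNIV. c k n * Ab$k$n) \<le> W M A + 2 * (\<Sum>k\<in>UNIV. \<Sum>n\<in>UNIV. c k n * A$k$n)"
  proof -
    have "W M Ab = (\<Sum>l\<in>UNIV. u l * (\<Sum>n\<in>UNIV. (X$l$n - (\<Sum>k\<in>UNIV. (M$l$k * A$k$n) * tA k n))\<^sup>2))"
      unfolding W_def Ab_eq by (simp add: ac_simps)
    also have "\<dots> \<le> (\<Sum>l\<in>UNIV. u l * (\<Sum>n\<in>UNIV. (X$l$n - (\<Sum>k\<in>UNIV. (M$l$k * A$k$n)))\<^sup>2))
      + (\<Sum>l\<in>UNIV. \<Sum>n\<in>UNIV. \<Sum>k\<in>UNIV. u l * (M$l$k * A$k$n) * ((\<Sum>j\<in>UNIV. M$l$j * A$j$n) * ((tA k n)\<^sup>2 - 1) - 2 * X$l$n * (tA k n - 1)))"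
      by (rule quad_bound[where u=u and X="\<lambda>l n. X$l$n" and w="\<lambda>l k n. M$l$k * A$k$n" and t="\<lambda>l k n. tA k n"])
        (use u_nn M_nonneg A_nonneg in auto)
    also have "(\<Sum>l\<in>UNIV. \<Sum>n\<in>UNIV. \<Sum>k\<in>UNIV. u l * (M$l$k * A$k$n) * ((\<Sum>j\<in>UNIV. M$l$j * A$j$n) * ((tA k n)\<^sup>2 - 1) - 2 * X$l$n * (tA k n - 1)))
       = (\<Sum>k\<in>UNIV. \<Sum>n\<in>UNIV. A$k$n * (P k n * ((tA k n)\<^sup>2 - 1) - 2 * B k n * (tA k n - 1)))"
    proof -
      have "(\<Sum>l\<in>UNIV. \<Sum>n\<in>UNIV. \<Sum>k\<in>UNIV. u l * (M$l$k * A$k$n) * ((\<Sum>j\<in>UNIV. M$l$j * A$j$n) * ((tA k n)\<^sup>2 - 1) - 2 * X$l$n * (tA k n - 1)))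
        = (\<Sum>k\<in>UNIV. \<Sum>n\<in>UNIV. \<Sum>l\<in>UNIV. u l * (M$l$k * A$k$n) * ((\<Sum>j\<in>UNIV. M$l$j * A$j$n) * ((tA k n)\<^sup>2 - 1) - 2 * X$l$n * (tA k n - 1)))"
        by (rule swap3)
      also have "\<dots> = (\<Sum>k\<in>UNIV. \<Sum>n\<in>UNIV. A$k$n * (P k n * ((tA k n)\<^sup>2 - 1) - 2 * B k n * (tA k n - 1)))"
      proof (intro sum.cong refl)
        fix k n
        have "A$k$n * (P k n * ((tA k n)\<^sup>2 - 1) - 2 * B k n * (tA k n - 1))
            = A$k$n * ((tA k n)\<^sup>2 - 1) * P k n - 2 * A$k$n * (tA k n - 1) * B k n"
          by (simp add: algebra_simps)
        also have "\<dots> = (\<Sum>l\<in>UNIV. A$k$n * ((tA k n)\<^sup>2 - 1) * (M$l$k * (u l * S l n)))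
                       - (\<Sum>l\<in>UNIV. 2 * A$k$n * (tA k n - 1) * (M$l$k * (u l * X$l$n)))"
          by (simp only: P_def B_def sum_distrib_left)
        also have "\<dots> = (\<Sum>l\<in>UNIV. A$k$n * ((tA k n)\<^sup>2 - 1) * (M$l$k * (u l * S l n))
                       - 2 * A$k$n * (tA k n - 1) * (M$l$k * (u l * X$l$n)))"
          by (simp only: sum_subtractf)
        also have "\<dots> = (\<Sum>l\<in>UNIV. u l * (M$l$k * A$k$n) * (S l n * ((tA k n)\<^sup>2 - 1) - 2 * X$l$n * (tA k n - 1)))"
          by (intro sum.cong refl) (simp add: algebra_simps)
        finally show "(\<Sum>l\<in>UNIV. u l * (M$l$k * A$k$n) * ((\<Sum>j\<in>UNIV. M$l$j * A$j$n) * ((tA k n)\<^sup>2 - 1) - 2 * X$l$n * (tA k n - 1)))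
           = A$k$n * (P k n * ((tA k n)\<^sup>2 - 1) - 2 * B k n * (tA k n - 1))"
          unfolding S_def by simp
      qed
      finally show ?thesis .
    qed
    finally have 1: "W M Ab \<le> W M A + (\<Sum>k\<in>UNIV. \<Sum>n\<in>UNIV. A$k$n * (P k n * ((tA k n)\<^sup>2 - 1) - 2 * B k n * (tA k n - 1)))"
      by (simp add: W_def)
    have 2: "(\<Sum>k\<in>UNIV. \<Sum>n\<in>UNIV. A$k$n * (P k n * ((tA k n)\<^sup>2 - 1) - 2 * B k n * (tA k n - 1)))
      + 2 * (\<Sum>k\<in>UNIV. \<Sum>n\<in>UNIV. c k n * Ab$k$n) - 2 * (\<Sum>k\<in>UNIV. \<Sum>n\<in>UNIV. c k n * A$k$n)
      = (\<Sum>k\<in>UNIV. \<Sum>n\<in>UNIV. A$k$n * (P k n * ((tA k n)\<^sup>2 - 1) - 2 * B k n * (tA k n - 1)) + 2 * c k n * A$k$n * (tA k n - 1))"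
    proof -
      have "2 * (\<Sum>k\<in>UNIV. \<Sum>n\<in>UNIV. c k n * Ab$k$n) - 2 * (\<Sum>k\<in>UNIV. \<Sum>n\<in>UNIV. c k n * A$k$n)
          = (\<Sum>k\<in>UNIV. \<Sum>n\<in>UNIV. 2 * (c k n * Ab$k$n) - 2 * (c k n * A$k$n))"
        by (simp only: sum_distrib_left sum_subtractf)
      also have "\<dots> = (\<Sum>k\<in>UNIV. \<Sum>n\<in>UNIV. 2 * c k n * A$k$n * (tA k n - 1))"
        by (intro sum.cong refl) (simp add: Ab_eq algebra_simps)
      finally have e: "2 * (\<Sum>k\<in>UNIV. \<Sum>n\<in>UNIV. c k n * Ab$k$n) - 2 * (\<Sum>k\<in>UNIV. \<Sum>n\<in>UNIV. c k n * A$k$n)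
          = (\<Sum>k\<in>UNIV. \<Sum>n\<in>UNIV. 2 * c k n * A$k$n * (tA k n - 1))" .
      have r: "(\<Sum>k\<in>UNIV. \<Sum>n\<in>UNIV. A$k$n * (P k n * ((tA k n)\<^sup>2 - 1) - 2 * B k n * (tA k n - 1)) + 2 * c k n * A$k$n * (tA k n - 1))
         = (\<Sum>k\<in>UNIV. \<Sum>n\<in>UNIV. A$k$n * (P k n * ((tA k n)\<^sup>2 - 1) - 2 * B k n * (tA k n - 1)))
           + (\<Sum>k\<in>UNIV. \<Sum>n\<in>UNIV. 2 * c k n * A$k$n * (tA k n - 1))"
        by (simp only: sum.distrib)
      show ?thesis using e r by linarith
    qed
    have 3: "(\<Sum>k\<in>UNIV. \<Sum>n\<in>UNIV. A$k$n * (P k n * ((tA k n)\<^sup>2 - 1) - 2 * B k n * (tA k n - 1)) + 2 * c k n * A$k$n * (tA k n - 1)) \<le> 0"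
    proof (intro sum_nonpos)
      fix k n
      show "A$k$n * (P k n * ((tA k n)\<^sup>2 - 1) - 2 * B k n * (tA k n - 1)) + 2 * c k n * A$k$n * (tA k n - 1) \<le> 0"
        using scalar_step[of "A$k$n" "c k n" "P k n" "B k n"] A_nonneg c_nn[of k n] D_pos[of k n]
        by (simp add: tA_def D_eq)
    qed
    show ?thesis using 1 2 3 by linarith
  qed
  have pen: "norm1 (pow_1mH Z xi h) = (\<Sum>k\<in>UNIV. \<Sum>n\<in>UNIV. (Z$k$n + xi) powr (1 - h$n))" for Z :: "real^'n^'k"
    by (simp add: norm1_def pow_1mH_def)
  have st4: "lam * norm1 (pow_1mH Ab xi h) \<le> lam * norm1 (pow_1mH A xi h)
     + (\<Sum>k\<in>UNIV. \<Sum>n\<in>UNIV. c k n * Ab$k$n) - (\<Sum>k\<in>UNIV. \<Sum>n\<in>UNIV. c k n * A$k$n)"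
  proof -
    have "lam * (Ab$k$n + xi) powr (1 - h$n) \<le> lam * (A$k$n + xi) powr (1 - h$n) + (c k n * Ab$k$n - c k n * A$k$n)" for k n
    proof -
      have "(Ab$k$n + xi) powr (1 - h$n) \<le> (A$k$n + xi) powr (1 - h$n) + (1 - h$n) * (A$k$n + xi) powr (1 - h$n - 1) * ((Ab$k$n + xi) - (A$k$n + xi))"
      proof -
        have "0 < A$k$n + xi" using A_nonneg xi by (simp add: add_nonneg_pos)
        moreover have "0 < Ab$k$n + xi" using Ab_nn[of k n] xi by (simp add: add_nonneg_pos)
        moreover have "0 \<le> 1 - h$n" "1 - h$n \<le> 1" using h[rule_format, of n] by auto
        ultimately show ?thesis using tangent_powr[of "A$k$n + xi" "Ab$k$n + xi" "1 - h$n"] by blast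
      qed
      hence "lam * (Ab$k$n + xi) powr (1 - h$n) \<le> lam * ((A$k$n + xi) powr (1 - h$n) + (1 - h$n) * (A$k$n + xi) powr (1 - h$n - 1) * ((Ab$k$n + xi) - (A$k$n + xi)))"
        using lam by (rule mult_left_mono)
      thus ?thesis by (simp add: c_def algebra_simps)
    qed
    hence "(\<Sum>k\<in>UNIV. \<Sum>n\<in>UNIV. lam * (Ab$k$n + xi) powr (1 - h$n)) \<le> (\<Sum>k\<in>UNIV. \<Sum>n\<in>UNIV. lam * (A$k$n + xi) powr (1 - h$n) + (c k n * Ab$k$n - c k n * A$k$n))"
      by (intro sum_mono)
    thus ?thesis by (simp add: pen sum_distrib_left sum.distrib sum_subtractf)
  qed
  show ?thesis
    unfolding objective_def U_def[symmetric] Ab_def[symmetric] Mb_def[symmetric]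
    using st1 st1eq st2 st3 st4 by linarith
qed

end
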